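(* Let $\mathcal Z_\nu$ be the Zorich map described in the context and assume $\nu\lambda>1/e$. For $\delta>0$ let $C_\delta=\{x\in\mathbb R^3:x_1^2+x_2^2<\delta^2\}$. Then there exist $\delta\in(0,\lambda)$ and $c>0$ such that: (a) for every $x\in C_\delta$, $p_3(\mathcal Z_\nu(x))>p_3(x)+c$, where $p_3(x_1,x_2,x_3)=x_3$; (b) for every $x\in C_\delta$ with $(x_1,x_2)\neq(0,0)$ there is $n\in\mathbb N$ with $\mathcal Z_\nu^n(x)\notin C_\delta$.
   Context: Zorich maps. Let $Q=\{(x_1,x_2)\in\mathbb R^2:|x_1|\le1,|x_2|\le1\}$. Let $L\ge1$ and let $\mathfrak h=(\mathfrak h_1,\mathfrak h_2,\mathfrak h_3)$ be a sense-preserving $L$-bi-Lipschitz map (i.e. $|a-b|/L\le|\mathfrak h(a)-\mathfrak h(b)|\le L|a-b|$) of $Q$ onto the closed upper unit hemisphere $\{x\in\mathbb R^3:|x|=1,x_3\ge0\}$, with $\partial Q$ mapped onto the equator. Assume $\mathfrak h_1(t,t)=\mathfrak h_2(t,t)$ and $\mathfrak h_1(t,-t)=-\mathfrak h_2(t,-t)$ for $t\in[-1,1]$ (so $\mathfrak h(0,0)=(0,0,1)$). Let $\lambda\ge1$ and $h(x_1,x_2)=\lambda\mathfrak h(x_1/\lambda,x_2/\lambda)$ on $\lambda Q=[-\lambda,\lambda]^2$. For $\nu>0$ set $\mathcal Z_\nu(x_1,x_2,x_3)=\nu e^{x_3}h(x_1,x_2)$ on $\lambda Q\times\mathbb R$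 (which is mapped onto $\{x_3\ge0\}$), and extend $\mathcal Z_\nu$ to $\mathbb R^3$ by repeated reflection: in the domain across the faces $x_1=(2k+1)\lambda$, $x_2=(2k+1)\lambda$ ($k\in\mathbb Z$) of the beams, and in the range across the plane $x_3=0$. *)

theory Defs
  imports "HOL-Analysis.Analysis" "HOL-Complex_Analysis.Complex_Analysis"
begin

definition sqQ :: "(real^2) set" where
  "sqQ = {x. \<bar>x$1\<bar> \<le> 1 \<and> \<bar>x$2\<bar> \<le> 1}"

definition sqQ_boundary :: "(real^2) set" where
  "sqQ_boundary = {x \<in> sqQ. \<bar>x$1\<bar> = 1 \<or> \<bar>x$2\<bar> = 1}"

definition upper_hemisphere :: "(real^3) set" where
  "upper_hemisphere = {x. norm x = 1 \<and> x$3 \<ge> 0}"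

definition equator :: "(real^3) set" where
  "equator = {x. norm x = 1 \<and> x$3 = 0}"

definition bi_lipschitz_on :: "real \<Rightarrow> ('a::metric_space) set \<Rightarrow> ('a \<Rightarrow> 'b::metric_space) \<Rightarrow> bool" where
  "bi_lipschitz_on L S f \<longleftrightarrow>
     (\<forall>a\<in>S. \<forall>b\<in>S. dist a b / L \<le> dist (f a) (f b) \<and> dist (f a) (f b) \<le> L * dist a b)"

definition sqQ_loop :: "real \<Rightarrow> real^2" where
  "sqQ_loop = linepath (vector [1,-1]) (vector [1,1]) +++
              (linepath (vector [1,1]) (vector [-1,1]) +++
              (linepath (vector [-1,1]) (vector [-1,-1]) +++
               linepath (vector [-1,-1]) (vector [1,-1])))"

text \<open>Sense-preserving (orientation with respect to the outward normal of the hemisphere,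
  equivalently the standard orientation after vertical projection): the image of the
  positively oriented boundary of Q winds once positively around the vertical axis.\<close>
definition sense_preserving_hemi :: "(real^2 \<Rightarrow> real^3) \<Rightarrow> bool" where
  "sense_preserving_hemi hh \<longleftrightarrow>
     winding_number ((\<lambda>p. Complex (hh p $ 1) (hh p $ 2)) \<circ> sqQ_loop) 0 = 1"

text \<open>Folding of a real coordinate into [-lam,lam] by repeated reflection across the
  lines (2k+1)lam; fold_index counts reflections (up to parity).\<close>
definition fold_index :: "real \<Rightarrow> real \<Rightarrow> int" where
  "fold_index lam s = \<lfloor>s / (2 * lam) + 1/2\<rfloor>"

definition fold_coord :: "real \<Rightarrow> real \<Rightarrow> real" where
  "fold_coord lam s =
     (if even (fold_index lam s) then 1 else -1) * (s - 2 * of_int (fold_index lam s) * lam)"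

definition zorich :: "(real^2 \<Rightarrow> real^3) \<Rightarrow> real \<Rightarrow> real \<Rightarrow> real^3 \<Rightarrow> real^3" where
  "zorich hh lam nu x =
     (let k1 = fold_index lam (x$1); k2 = fold_index lam (x$2);
          u = vector [fold_coord lam (x$1), fold_coord lam (x$2)] :: real^2;
          y = lam *\<^sub>R hh ((1 / lam) *\<^sub>R u);
          s = (if even (k1 + k2) then 1 else -1) :: real
      in (nu * exp (x$3)) *\<^sub>R vector [y$1, y$2, s * y$3])"

definition cyl :: "real \<Rightarrow> (real^3) set" where
  "cyl \<delta> = {x. (x$1)\<^sup>2 + (x$2)\<^sup>2 < \<delta>\<^sup>2}"

end

theory Submission
  imports Defs
begin
lemma norm2_3: "(norm (v::real^3))^2 = (v$1)^2 + (v$2)^2 + (v$3)^2"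
  by (simp add: norm_vec_def L2_set_def sum_3)
lemma norm2_2: "(norm (v::real^2))^2 = (v$1)^2 + (v$2)^2"
  by (simp add: norm_vec_def L2_set_def sum_2)
lemma fold0: assumes "0 < lam" "\<bar>s\<bar> < lam" shows "fold_index lam s = 0" "fold_coord lam s = s"
proof -
  have "0 \<le> s / (2*lam) + 1/2" "s / (2*lam) + 1/2 < 1" using assms by (auto simp: field_simps)
  then show "fold_index lam s = 0" unfolding fold_index_def by linarith
  then show "fold_coord lam s = s" unfolding fold_coord_def by simp
qed
lemma vec0: "vector [0,0] = (0::real^2)"
  by (simp add: vec_eq_iff forall_2)

lemma sqlt: "(x::real)^2 < d^2 \<Longrightarrow> 0 < d \<Longrightarrow> \<bar>x\<bar> < d"
  by (simp add: abs_less_iff power2_less_imp_less)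

lemma zor_cyl:
  assumes "0 < d" "d < lam" "x \<in> cyl d"
  shows "zorich hh lam nu x $ 1 = nu * exp (x$3) * lam * (hh ((1/lam) *\<^sub>R vector [x$1, x$2]) $ 1)"
        "zorich hh lam nu x $ 2 = nu * exp (x$3) * lam * (hh ((1/lam) *\<^sub>R vector [x$1, x$2]) $ 2)"
        "zorich hh lam nu x $ 3 = nu * exp (x$3) * lam * (hh ((1/lam) *\<^sub>R vector [x$1, x$2]) $ 3)"
proof -
  have "(x$1)^2 < d^2" "(x$2)^2 < d^2" using assms(3) unfolding cyl_def
    by (auto intro: le_less_trans[rotated] simp: add_nonneg_nonneg)
  then have "\<bar>x$1\<bar> < lam" "\<bar>x$2\<bar> < lam" using sqlt assms(1,2) by fastforce+
  then have f: "fold_index lam (x$1) = 0" "fold_index lam (x$2) = 0"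
     "fold_coord lam (x$1) = x$1" "fold_coord lam (x$2) = x$2" using fold0 assms by auto
  show "zorich hh lam nu x $ 1 = nu * exp (x$3) * lam * (hh ((1/lam) *\<^sub>R vector [x$1, x$2]) $ 1)"
        "zorich hh lam nu x $ 2 = nu * exp (x$3) * lam * (hh ((1/lam) *\<^sub>R vector [x$1, x$2]) $ 2)"
        "zorich hh lam nu x $ 3 = nu * exp (x$3) * lam * (hh ((1/lam) *\<^sub>R vector [x$1, x$2]) $ 3)"
    unfolding zorich_def Let_def f by simp_all
qed
lemma aux_lin: "1 + y + l \<le> z \<Longrightarrow> 0 < (1+l)/2 \<Longrightarrow> y + (1+l)/2 < (z::real)"
  by (simp add: field_simps)

theorem lemma4p2:
  fixes hh :: "real^2 \<Rightarrow> real^3" and L lam nu :: real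
  assumes L: "L \<ge> 1"
    and bilip: "bi_lipschitz_on L sqQ hh"
    and onto: "hh ` sqQ = upper_hemisphere"
    and bdry: "hh ` sqQ_boundary = equator"
    and sense: "sense_preserving_hemi hh"
    and sym1: "\<And>t. t \<in> {-1..1} \<Longrightarrow> hh (vector [t, t]) $ 1 = hh (vector [t, t]) $ 2"
    and sym2: "\<And>t. t \<in> {-1..1} \<Longrightarrow> hh (vector [t, -t]) $ 1 = - (hh (vector [t, -t]) $ 2)"
    and lam: "lam \<ge> 1"
    and nu: "nu > 0"
    and nulam: "nu * lam > 1 / exp 1"
  shows "\<exists>\<delta> c. 0 < \<delta> \<and> \<delta> < lam \<and> c > 0 \<and>
           (\<forall>x \<in> cyl \<delta>. zorich hh lam nu x $ 3 > x $ 3 + c) \<and>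
           (\<forall>x \<in> cyl \<delta>. (x$1, x$2) \<noteq> (0, 0) \<longrightarrow>
              (\<exists>n::nat. (zorich hh lam nu ^^ n) x \<notin> cyl \<delta>))"
proof -
  have 0: "(0::real^2) \<in> sqQ" by (simp add: sqQ_def)
  have hemi: "norm (hh p) = 1 \<and> hh p $ 3 \<ge> 0" if "p \<in> sqQ" for p
    using that onto unfolding upper_hemisphere_def by blast
  have N12: "hh 0 $ 1 = 0" "hh 0 $ 2 = 0"
    using sym1[of 0] sym2[of 0] by (simp_all add: vec0)
  have N3: "hh 0 $ 3 = 1"
  proof -
    have "(hh 0 $ 3)^2 = 1" using hemi[OF 0] norm2_3[of "hh 0"] N12 by simp
    then show ?thesis using hemi[OF 0] by (simp add: power2_eq_1_iff)
  qed
  have lip: "norm p / L \<le> norm (hh p - hh 0) \<and> norm (hh p - hh 0) \<le> L * norm p" if "p \<in> sqQ" for p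
  proof -
    have "dist p 0 / L \<le> dist (hh p) (hh 0) \<and> dist (hh p) (hh 0) \<le> L * dist p 0"
      using bilip that 0 unfolding bi_lipschitz_on_def by blast
    then show ?thesis by (simp add: dist_norm)
  qed
  have key3: "hh p $ 3 \<ge> 1 - L * norm p" if "p \<in> sqQ" for p
  proof -
    have "\<bar>(hh p - hh 0) $ 3\<bar> \<le> L * norm p" using lip[OF that] component_le_norm_cart order_trans by blast
    then show ?thesis using N3 by simp
  qed
  have keyh: "(hh p $ 1)^2 + (hh p $ 2)^2 \<ge> (norm p)^2 / (2 * L^2)" if "p \<in> sqQ" for p
  proof -
    define d where "d = hh p - hh 0"
    have s1: "(hh p $ 1)^2 + (hh p $ 2)^2 + (hh p $ 3)^2 = 1" using hemi[OF that] norm2_3[of "hh p"] by simp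
    have nd: "(norm d)^2 = (hh p $ 1)^2 + (hh p $ 2)^2 + (hh p $ 3 - 1)^2"
      using norm2_3[of d] N12 N3 by (simp add: d_def)
    have h30: "0 \<le> hh p $ 3" using hemi[OF that] by simp
    have "(hh p $ 3)^2 \<le> 1^2" using s1 by (simp add: add_nonneg_nonneg) (smt (verit) zero_le_power2)
    then have h31: "hh p $ 3 \<le> 1" by (rule power2_le_imp_le) simp
    have sq: "(hh p $ 3)^2 \<le> hh p $ 3" unfolding power2_eq_square by (rule mult_left_le[OF h31 h30])
    have nd2: "(norm d)^2 = (hh p $ 1)^2 + (hh p $ 2)^2 + (hh p $ 3)^2 - 2 * hh p $ 3 + 1"
      using nd by (simp add: power2_diff)
    have ge: "(hh p $ 1)^2 + (hh p $ 2)^2 \<ge> (norm d)^2 / 2"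
      using nd2 s1 sq by linarith
    have "norm p / L \<le> norm d" using lip[OF that] by (simp add: d_def)
    then have "(norm p / L)^2 \<le> (norm d)^2" using L by (intro power_mono) auto
    then have "(norm p)^2 / L^2 \<le> (norm d)^2" by (simp add: power_divide)
    then show ?thesis using ge by (simp add: field_simps)
  qed
  define m where "m = lam - 1 / (exp 1 * nu)"
  have m: "m > 0" using nulam nu unfolding m_def by (simp add: field_simps)
  define \<delta> where "\<delta> = min (lam/2) (m / (2*L))"
  have d0: "0 < \<delta>" "\<delta> < lam" using m L lam unfolding \<delta>_def by auto
  have Ld: "L * \<delta> \<le> m/2" using L m unfolding \<delta>_def by (simp add: min_def field_simps)
  define a where "a = nu * (lam - L * \<delta>)"
  have a1: "a \<ge> 1 / exp 1 + nu * m / 2"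
  proof -
    have "a \<ge> nu * (lam - m/2)" unfolding a_def using Ld nu by (intro mult_left_mono) auto
    also have "nu * (lam - m/2) = 1 / exp 1 + nu * m / 2" using nu unfolding m_def by (simp add: field_simps)
    finally show ?thesis .
  qed
  have "nu * m / 2 > 0" using nu m by simp
  then have a: "a > 1 / exp 1" using a1 by linarith
  have "1 / exp 1 > (0::real)" by simp
  then have apos: "a > 0" using a by linarith
  define c where "c = (1 + ln a) / 2"
  have c: "c > 0"
  proof -
    have "ln (1 / exp 1) < ln a" using a apos by (subst ln_less_cancel_iff) auto
    moreover have "ln (1 / exp 1) = (-1::real)" by (simp add: ln_div)
    ultimately show ?thesis unfolding c_def by simp
  qed
  have pin: "(1/lam) *\<^sub>R vector [x$1, x$2] \<in> sqQ" and
    pn: "norm ((1/lam) *\<^sub>R vector [x$1, x$2] :: real^2) < \<delta> / lam" and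
    pn2: "(norm ((1/lam) *\<^sub>R vector [x$1, x$2] :: real^2))^2 = ((x$1)^2 + (x$2)^2) / lam^2"
    if "x \<in> cyl \<delta>" for x :: "real^3"
  proof -
    have xs: "(x$1)^2 + (x$2)^2 < \<delta>^2" using that unfolding cyl_def by simp
    have "(x$1)^2 < \<delta>^2" "(x$2)^2 < \<delta>^2" using xs zero_le_power2[of "x$1"] zero_le_power2[of "x$2"] by linarith+
    then have "\<bar>x$1\<bar> < \<delta>" "\<bar>x$2\<bar> < \<delta>" using sqlt d0(1) by blast+
    then have "\<bar>x$1\<bar> < lam" "\<bar>x$2\<bar> < lam" using d0(2) by linarith+
    then show "(1/lam) *\<^sub>R vector [x$1, x$2] \<in> sqQ" using lam unfolding sqQ_def by (simp add: abs_mult)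
    show p2: "(norm ((1/lam) *\<^sub>R vector [x$1, x$2] :: real^2))^2 = ((x$1)^2 + (x$2)^2) / lam^2"
      by (simp add: norm2_2 power_divide add_divide_distrib)
    have "((x$1)^2 + (x$2)^2) / lam^2 < (\<delta>/lam)^2" using xs lam by (simp add: power_divide divide_strict_right_mono)
    then have "(norm ((1/lam) *\<^sub>R vector [x$1, x$2] :: real^2))^2 < (\<delta>/lam)^2" using p2 by simp
    then show "norm ((1/lam) *\<^sub>R vector [x$1, x$2] :: real^2) < \<delta> / lam"
    proof (rule power2_less_imp_less)
      show "0 \<le> \<delta> / lam" using d0 lam by simp
    qed
  qed
  have parta: "zorich hh lam nu x $ 3 > x $ 3 + c" if x: "x \<in> cyl \<delta>" for x :: "real^3"
  proof -
    let ?p = "(1/lam) *\<^sub>R vector [x$1, x$2] :: real^2"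
    have "hh ?p $ 3 \<ge> 1 - L * norm ?p" using key3[OF pin[OF x]] .
    moreover have "L * norm ?p \<le> L * (\<delta> / lam)" using pn[OF x] L by (intro mult_left_mono) auto
    ultimately have h: "hh ?p $ 3 \<ge> 1 - L * \<delta> / lam" by simp
    have "zorich hh lam nu x $ 3 = nu * exp (x$3) * lam * hh ?p $ 3" using zor_cyl[OF d0 x] by simp
    also have "\<dots> \<ge> nu * exp (x$3) * lam * (1 - L * \<delta> / lam)"
      using h nu lam by (intro mult_left_mono) auto
    also have "nu * exp (x$3) * lam * (1 - L * \<delta> / lam) = exp (x$3 + ln a)"
      using lam apos unfolding a_def by (simp add: exp_add field_simps)
    also have "exp (x$3 + ln a) \<ge> 1 + (x$3 + ln a)" by (rule exp_ge_add_one_self)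
    finally have "zorich hh lam nu x $ 3 \<ge> 1 + x$3 + ln a" by simp
    then show ?thesis using c unfolding c_def by (intro aux_lin)
  qed
  define K where "K = nu^2 / (2 * L^2)"
  have K: "K > 0" unfolding K_def using nu L by simp
  have partb: "(zorich hh lam nu x $ 1)^2 + (zorich hh lam nu x $ 2)^2 \<ge> K * exp (2 * x$3) * ((x$1)^2 + (x$2)^2)"
    if x: "x \<in> cyl \<delta>" for x :: "real^3"
  proof -
    let ?p = "(1/lam) *\<^sub>R vector [x$1, x$2] :: real^2"
    have "(zorich hh lam nu x $ 1)^2 + (zorich hh lam nu x $ 2)^2 = (nu * exp (x$3) * lam)^2 * ((hh ?p $ 1)^2 + (hh ?p $ 2)^2)"
      using zor_cyl[OF d0 x] by (simp add: power_mult_distrib algebra_simps)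
    also have "\<dots> \<ge> (nu * exp (x$3) * lam)^2 * ((norm ?p)^2 / (2 * L^2))"
      using keyh[OF pin[OF x]] by (intro mult_left_mono) auto
    also have "(nu * exp (x$3) * lam)^2 * ((norm ?p)^2 / (2 * L^2)) = K * exp (2 * x$3) * ((x$1)^2 + (x$2)^2)"
    proof -
      have e: "(exp (x$3))^2 = exp (2 * x$3)" by (simp add: power2_eq_square flip: exp_add)
      show ?thesis unfolding pn2[OF x] K_def power_mult_distrib e[symmetric] using lam L by (simp add: field_simps)
    qed
    finally show ?thesis .
  qed
  have partb2: "\<exists>n. (zorich hh lam nu ^^ n) x \<notin> cyl \<delta>"
    if x: "x \<in> cyl \<delta>" and nz: "(x$1, x$2) \<noteq> (0,0)" for x :: "real^3"
  proof (rule ccontr)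
    assume "\<not> ?thesis"
    then have allin: "\<forall>n. (zorich hh lam nu ^^ n) x \<in> cyl \<delta>" by blast
    define z where "z n = (zorich hh lam nu ^^ n) x" for n
    define r where "r n = (z n $ 1)^2 + (z n $ 2)^2" for n
    have zin: "z n \<in> cyl \<delta>" for n using allin z_def by simp
    have zS: "z (Suc n) = zorich hh lam nu (z n)" for n by (simp add: z_def)
    have z3: "z n $ 3 \<ge> x $ 3 + real n * c" for n
    proof (induction n)
      case 0 show ?case by (simp add: z_def)
    next
      case (Suc n)
      have "z (Suc n) $ 3 > z n $ 3 + c" using parta[OF zin[of n]] zS by simp
      then show ?case using Suc by (simp add: algebra_simps)
    qed
    have rS: "r (Suc n) \<ge> K * exp (2 * z n $ 3) * r n" for n
      using partb[OF zin[of n]] zS r_def by simp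
    have r0: "r 0 > 0"
    proof -
      have "x$1 \<noteq> 0 \<or> x$2 \<noteq> 0" using nz by auto
      then have "(x$1)^2 + (x$2)^2 > 0" by (auto simp: add_pos_nonneg add_nonneg_pos)
      then show ?thesis by (simp add: r_def z_def)
    qed
    have rpos: "r n > 0" for n
    proof (induction n)
      case 0 show ?case by (rule r0)
    next
      case (Suc n)
      have "K * exp (2 * z n $ 3) * r n > 0" using K Suc by simp
      then show ?case using rS[of n] by linarith
    qed
    obtain M :: nat where M: "real M > (1/K - x$3) / c" using reals_Archimedean2 by blast
    have Mc: "real M * c > 1/K - x$3" using M c by (simp add: field_simps)
    have big: "K * exp (2 * z n $ 3) \<ge> 2" if "n \<ge> M" for n
    proof -
      have "real n * c \<ge> real M * c" using that c by (intro mult_right_mono) auto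
      then have zz: "z n $ 3 > 1/K" using z3[of n] Mc by linarith
      have "exp (2 * z n $ 3) \<ge> 1 + 2 * z n $ 3" by (rule exp_ge_add_one_self)
      then have "K * exp (2 * z n $ 3) \<ge> K * (1 + 2 * z n $ 3)" using K by (intro mult_left_mono) auto
      moreover have "K * (1 + 2 * z n $ 3) \<ge> 2"
      proof -
        have "K * z n $ 3 > K * (1/K)" using zz K by (intro mult_strict_left_mono) auto
        then have "K * z n $ 3 > 1" using K by simp
        then show ?thesis using K by (simp add: algebra_simps)
      qed
      ultimately show ?thesis by linarith
    qed
    have grow: "r (M + k) \<ge> 2^k * r M" for k
    proof (induction k)
      case 0 show ?case by simp
    next
      case (Suc k)
      have "r (M + Suc k) \<ge> K * exp (2 * z (M+k) $ 3) * r (M+k)" using rS[of "M+k"] by simp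
      moreover have "K * exp (2 * z (M+k) $ 3) * r (M+k) \<ge> 2 * r (M+k)"
        using big[of "M+k"] rpos[of "M+k"] by (intro mult_right_mono) auto
      ultimately show ?case using Suc by simp
    qed
    obtain k where k: "\<delta>^2 / r M < 2^k" using real_arch_pow[of 2 "\<delta>^2 / r M"] by auto
    then have "\<delta>^2 < 2^k * r M" using rpos[of M] by (simp add: field_simps)
    then have "\<delta>^2 < r (M+k)" using grow[of k] by linarith
    moreover have "r (M+k) < \<delta>^2" using zin[of "M+k"] unfolding cyl_def r_def by simp
    ultimately show False by linarith
  qed
  show ?thesis
    using d0 c parta partb2 by blast
qed
end
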